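(* Let $\{a_n\}_{n\ge0}$ be a P-recursive sequence whose asymptotic expression is \[ a_n = e^{Q(\rho,n)}\, n^{r}\left(\sum_{s=0}^{M} b_s n^{-s/\rho} + o\!\left(n^{-M/\rho}\right)\right),\qquad Q(\rho,n)=\mu_0 n\log n+\sum_{j=1}^{\rho}\mu_j n^{j/\rho}, \] where $\rho, M$ are positive integers, $\mu_j, r, b_s$ are real numbers, and $b_0\neq 0$. Then there exist real numbers $c_1,\dots,c_M$ such that \[ \lim_{n\to\infty} n^{M/\rho}\left(\frac{a_na_{n+2}}{a_{n+1}^2}-1-\sum_{i=1}^{M}\frac{c_i}{n^{i/\rho}}\right)=0 . \]
   Context: A sequence $\{a_n\}$ is P-recursive (of order $d$) if it satisfies a recurrence $a_n=r_1(n)a_{n-1}+\cdots+r_d(n)a_{n-d}$ with rational functions $r_i(n)$. *)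

theory Defs
  imports "HOL-Computational_Algebra.Polynomial" "HOL-Library.Landau_Symbols"
begin

definition P_recursive_of_order :: "(nat \<Rightarrow> real) \<Rightarrow> nat \<Rightarrow> bool" where
  "P_recursive_of_order a d \<longleftrightarrow>
     (\<exists>(p :: nat \<Rightarrow> real poly) (q :: nat \<Rightarrow> real poly) (N :: nat).
        N \<ge> d \<and> (\<forall>i\<in>{1..d}. q i \<noteq> 0) \<and>
        (\<forall>n\<ge>N. (\<forall>i\<in>{1..d}. poly (q i) (real n) \<noteq> 0) \<and>
           a n = (\<Sum>i=1..d. poly (p i) (real n) / poly (q i) (real n) * a (n - i))))"

definition P_recursive :: "(nat \<Rightarrow> real) \<Rightarrow> bool" where
  "P_recursive a \<longleftrightarrow> (\<exists>d. P_recursive_of_order a d)"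

definition Qexp :: "nat \<Rightarrow> (nat \<Rightarrow> real) \<Rightarrow> nat \<Rightarrow> real" where
  "Qexp \<rho> \<mu> n = \<mu> 0 * real n * ln (real n) + (\<Sum>j=1..\<rho>. \<mu> j * real n powr (real j / real \<rho>))"

end

theory Submission imports Defs "HOL-Analysis.Analysis" begin


definition Xp :: "(nat \<Rightarrow> real) \<Rightarrow> (nat \<Rightarrow> real) \<Rightarrow> real \<Rightarrow> bool" where
  "Xp x f L \<longleftrightarrow> (\<forall>m. \<exists>p. poly p 0 = L \<and> (\<lambda>n. f n - poly p (x n)) \<in> O(\<lambda>n. x n ^ m))"

lemma xpow_mono:
  fixes x :: "nat \<Rightarrow> real"
  assumes x: "x \<longlonglongrightarrow> 0" and "m \<le> k"
  shows "(\<lambda>n. x n ^ k) \<in> O(\<lambda>n. x n ^ m)"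
proof -
  have "eventually (\<lambda>n. dist (x n) 0 < 1) sequentially" using x by (rule tendstoD) simp
  hence "eventually (\<lambda>n. norm (x n ^ k) \<le> 1 * norm (x n ^ m)) sequentially"
  proof eventually_elim
    case (elim n)
    hence h: "\<bar>x n\<bar> \<le> 1" by simp
    have "\<bar>x n\<bar> ^ k = \<bar>x n\<bar> ^ m * \<bar>x n\<bar> ^ (k - m)" using \<open>m \<le> k\<close>
      by (simp add: power_add[symmetric])
    also have "\<dots> \<le> \<bar>x n\<bar> ^ m * 1"
      by (intro mult_left_mono power_le_one) (use h in auto)
    finally show ?case by (simp add: power_abs)
  qed
  thus ?thesis by (rule bigoI)
qed

lemma poly_bigo1:
  fixes x :: "nat \<Rightarrow> real"
  assumes x: "x \<longlonglongrightarrow> 0"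
  shows "(\<lambda>n. poly p (x n)) \<in> O(\<lambda>_. 1)"
  by (rule bigoI_tendsto[where c="poly p 0"]) (use x in \<open>auto intro!: tendsto_intros\<close>)

lemma Xp_bigo1:
  assumes x: "x \<longlonglongrightarrow> 0" and "Xp x f L"
  shows "f \<in> O(\<lambda>_. 1)"
proof -
  obtain p where "(\<lambda>n. f n - poly p (x n)) \<in> O(\<lambda>n. x n ^ 0)" using assms(2) unfolding Xp_def by blast
  hence "(\<lambda>n. f n - poly p (x n)) \<in> O(\<lambda>_. 1)" by simp
  from sum_in_bigo(1)[OF this poly_bigo1[OF x, of p]] show ?thesis by simp
qed

lemma Xp_tendsto:
  assumes x: "x \<longlonglongrightarrow> 0" and "Xp x f L"
  shows "f \<longlonglongrightarrow> L"
proof -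
  obtain p where p0: "poly p 0 = L" and "(\<lambda>n. f n - poly p (x n)) \<in> O(\<lambda>n. x n ^ 1)"
    using assms(2) unfolding Xp_def by blast
  then obtain c where "c > 0" and ev: "eventually (\<lambda>n. norm (f n - poly p (x n)) \<le> c * norm (x n ^ 1)) sequentially"
    by (elim landau_o.bigE)
  have "(\<lambda>n. c * norm (x n ^ 1)) \<longlonglongrightarrow> c * norm ((0::real) ^ 1)"
    by (intro tendsto_intros x)
  hence "(\<lambda>n. f n - poly p (x n)) \<longlonglongrightarrow> 0"
    by (intro Lim_null_comparison[OF ev]) simp
  moreover have "(\<lambda>n. poly p (x n)) \<longlonglongrightarrow> L" using p0 x by (auto intro!: tendsto_eq_intros)
  ultimately have "(\<lambda>n. (f n - poly p (x n)) + poly p (x n)) \<longlonglongrightarrow> 0 + L" by (rule tendsto_add)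
  thus ?thesis by simp
qed

lemma Xp_cong:
  assumes "Xp x f L" "eventually (\<lambda>n. f n = g n) sequentially"
  shows "Xp x g L"
  unfolding Xp_def
proof
  fix m
  obtain p where "poly p 0 = L" "(\<lambda>n. f n - poly p (x n)) \<in> O(\<lambda>n. x n ^ m)"
    using assms(1) unfolding Xp_def by blast
  moreover have ev: "eventually (\<lambda>n. f n - poly p (x n) = g n - poly p (x n)) sequentially"
    using assms(2) by eventually_elim simp
  ultimately show "\<exists>p. poly p 0 = L \<and> (\<lambda>n. g n - poly p (x n)) \<in> O(\<lambda>n. x n ^ m)"
    using landau_o.big.in_cong[OF ev] by auto
qed

lemma Xp_const: "Xp x (\<lambda>n. c) c"
  unfolding Xp_def by (intro allI exI[of _ "[:c:]"]) simp

lemma Xp_id: "Xp x x 0"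
  unfolding Xp_def by (intro allI exI[of _ "[:0,1:]"]) simp

lemma Xp_add:
  assumes "Xp x f L1" "Xp x g L2"
  shows "Xp x (\<lambda>n. f n + g n) (L1 + L2)"
  unfolding Xp_def
proof
  fix m
  obtain p where p: "poly p 0 = L1" "(\<lambda>n. f n - poly p (x n)) \<in> O(\<lambda>n. x n ^ m)"
    using assms(1) unfolding Xp_def by blast
  obtain q where q: "poly q 0 = L2" "(\<lambda>n. g n - poly q (x n)) \<in> O(\<lambda>n. x n ^ m)"
    using assms(2) unfolding Xp_def by blast
  have "(\<lambda>n. (f n - poly p (x n)) + (g n - poly q (x n))) \<in> O(\<lambda>n. x n ^ m)"
    by (rule sum_in_bigo(1)[OF p(2) q(2)])
  thus "\<exists>r. poly r 0 = L1 + L2 \<and> (\<lambda>n. f n + g n - poly r (x n)) \<in> O(\<lambda>n. x n ^ m)"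
    using p q by (intro exI[of _ "p + q"]) (simp add: algebra_simps)
qed

lemma Xp_mult:
  assumes x: "x \<longlonglongrightarrow> 0" and "Xp x f L1" "Xp x g L2"
  shows "Xp x (\<lambda>n. f n * g n) (L1 * L2)"
  unfolding Xp_def
proof
  fix m
  obtain p where p: "poly p 0 = L1" "(\<lambda>n. f n - poly p (x n)) \<in> O(\<lambda>n. x n ^ m)"
    using assms(2) unfolding Xp_def by blast
  obtain q where q: "poly q 0 = L2" "(\<lambda>n. g n - poly q (x n)) \<in> O(\<lambda>n. x n ^ m)"
    using assms(3) unfolding Xp_def by blast
  have g1: "g \<in> O(\<lambda>_. 1)" by (rule Xp_bigo1[OF x assms(3)])
  have a: "(\<lambda>n. (f n - poly p (x n)) * g n) \<in> O(\<lambda>n. x n ^ m)"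
    by (rule landau_o.big_1_mult[OF p(2) g1])
  have b: "(\<lambda>n. (g n - poly q (x n)) * poly p (x n)) \<in> O(\<lambda>n. x n ^ m)"
    by (rule landau_o.big_1_mult[OF q(2) poly_bigo1[OF x]])
  have "(\<lambda>n. (f n - poly p (x n)) * g n + (g n - poly q (x n)) * poly p (x n)) \<in> O(\<lambda>n. x n ^ m)"
    by (rule sum_in_bigo(1)[OF a b])
  thus "\<exists>r. poly r 0 = L1 * L2 \<and> (\<lambda>n. f n * g n - poly r (x n)) \<in> O(\<lambda>n. x n ^ m)"
    using p q by (intro exI[of _ "p * q"]) (simp add: algebra_simps)
qed

lemma Xp_sum:
  assumes x: "x \<longlonglongrightarrow> 0" and "\<And>j. j \<in> S \<Longrightarrow> Xp x (F j) (L j)"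
  shows "Xp x (\<lambda>n. \<Sum>j\<in>S. F j n) (\<Sum>j\<in>S. L j)"
  using assms(2)
proof (induction S rule: infinite_finite_induct)
  case (infinite A) thus ?case by (simp add: Xp_const)
next
  case empty thus ?case by (simp add: Xp_const)
next
  case (insert a A)
  have "Xp x (\<lambda>n. F a n + (\<Sum>j\<in>A. F j n)) (L a + sum L A)"
    by (rule Xp_add) (use insert in auto)
  thus ?case using insert.hyps by simp
qed

lemma Xp_power:
  assumes x: "x \<longlonglongrightarrow> 0" and "Xp x f L"
  shows "Xp x (\<lambda>n. f n ^ k) (L ^ k)"
  by (induction k) (simp_all add: Xp_const Xp_mult[OF x assms(2)])

lemma Xp_poly:
  assumes x: "x \<longlonglongrightarrow> 0" and "Xp x f L"
  shows "Xp x (\<lambda>n. poly q (f n)) (poly q L)"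
proof (induction q)
  case 0 thus ?case by (simp add: Xp_const)
next
  case (pCons a q)
  have "Xp x (\<lambda>n. a + f n * poly q (f n)) (a + L * poly q L)"
    by (intro Xp_add Xp_const Xp_mult[OF x assms(2)] pCons.IH)
  thus ?case by simp
qed



definition Af :: "(real \<Rightarrow> real) \<Rightarrow> bool" where
  "Af g \<longleftrightarrow> (\<forall>m. \<exists>q \<delta> K. \<delta> > 0 \<and> (\<forall>t. \<bar>t\<bar> < \<delta> \<longrightarrow> \<bar>g t - poly q t\<bar> \<le> K * \<bar>t\<bar>^m))"

definition PS :: "(real \<Rightarrow> real) \<Rightarrow> real \<Rightarrow> (nat \<Rightarrow> real) \<Rightarrow> bool" where
  "PS g R a \<longleftrightarrow> R > 0 \<and> (\<forall>t. \<bar>t\<bar> < R \<longrightarrow> (\<lambda>i. a i * t^i) sums g t)"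

lemma PS_zero: assumes "PS g R a" shows "g 0 = a 0"
proof -
  have R: "R > 0" and H: "\<forall>t. \<bar>t\<bar> < R \<longrightarrow> (\<lambda>i. a i * t^i) sums g t"
    using assms unfolding PS_def by auto
  have "(\<lambda>i. a i * 0^i) sums g 0" using H[rule_format, of 0] R by simp
  thus ?thesis by simp
qed

lemma PS_div:
  assumes "PS g R a" "\<forall>i<k. a i = 0"
  shows "PS (\<lambda>t. \<Sum>i. a (i+k) * t^i) R (\<lambda>i. a (i+k)) \<and>
         (\<forall>t. \<bar>t\<bar> < R \<longrightarrow> g t = t^k * (\<Sum>i. a (i+k) * t^i))"
proof -
  have R: "R > 0" using assms(1) unfolding PS_def by simp
  have main: "(\<lambda>i. a (i+k) * t^i) sums (\<Sum>i. a (i+k) * t^i) \<and> g t = t^k * (\<Sum>i. a (i+k) * t^i)"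
    if t: "\<bar>t\<bar> < R" for t
  proof (cases "t = 0")
    case True
    have ga: "g 0 = a 0" by (rule PS_zero[OF assms(1)])
    have s0: "(\<lambda>i. a (i+k) * 0^i) sums a k" using powser_sums_zero[of "\<lambda>i. a (i+k)"] by simp
    have z0: "(\<Sum>i. a (i+k) * 0^i) = a k" using powser_zero[of "\<lambda>i. a (i+k)"] by simp
    have "g 0 = 0^k * a k"
    proof (cases k)
      case 0 thus ?thesis using ga by simp
    next
      case (Suc j) thus ?thesis using ga assms(2) by simp
    qed
    thus ?thesis using True s0 z0 by simp
  next
    case False
    have s: "(\<lambda>i. a i * t^i) sums g t" using assms(1) t unfolding PS_def by blast
    have "(\<Sum>i<k. a i * t^i) = 0" using assms(2) by simp
    hence "(\<lambda>i. a (i+k) * t^(i+k)) sums g t"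
      using sums_iff_shift[of "\<lambda>i. a i * t^i" k "g t"] s by simp
    hence "(\<lambda>i. a (i+k) * t^(i+k) / t^k) sums (g t / t^k)" by (rule sums_divide)
    moreover have "\<And>i. a (i+k) * t^(i+k) / t^k = a (i+k) * t^i"
      using False by (simp add: power_add)
    ultimately have s2: "(\<lambda>i. a (i+k) * t^i) sums (g t / t^k)" by simp
    hence "(\<Sum>i. a (i+k) * t^i) = g t / t^k" by (simp add: sums_unique[symmetric])
    thus ?thesis using s2 False by simp
  qed
  show ?thesis using main R unfolding PS_def by blast
qed

lemma PS_bound:
  assumes "PS h R b"
  shows "\<exists>K. \<forall>t. \<bar>t\<bar> \<le> R/2 \<longrightarrow> \<bar>h t\<bar> \<le> K"
proof -
  have R: "R > 0" using assms unfolding PS_def by simp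
  have "(\<lambda>i. b i * (3*R/4)^i) sums h (3*R/4)" using assms R unfolding PS_def by auto
  hence "summable (\<lambda>i. b i * (3*R/4)^i)" by (rule sums_summable)
  hence sn: "summable (\<lambda>i. norm (b i * (R/2)^i))"
    by (rule powser_insidea) (use R in simp)
  show ?thesis
  proof (intro exI allI impI)
    fix t :: real assume t: "\<bar>t\<bar> \<le> R/2"
    have le: "norm (b i * t^i) \<le> norm (b i * (R/2)^i)" for i
    proof -
      have "\<bar>t\<bar>^i \<le> (R/2)^i" by (rule power_mono) (use t in auto)
      hence "\<bar>b i\<bar> * \<bar>t\<bar>^i \<le> \<bar>b i\<bar> * (R/2)^i" by (rule mult_left_mono) simp
      thus ?thesis using R by (simp add: abs_mult power_abs)
    qed
    have sn2: "summable (\<lambda>i. norm (b i * t^i))"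
      by (rule summable_comparison_test[OF _ sn]) (use le in auto)
    have "h t = (\<Sum>i. b i * t^i)" using assms t R unfolding PS_def by (auto intro!: sums_unique)
    hence "\<bar>h t\<bar> \<le> (\<Sum>i. norm (b i * t^i))" using summable_norm[OF sn2] by simp
    also have "\<dots> \<le> (\<Sum>i. norm (b i * (R/2)^i))"
      by (rule suminf_le[OF le sn2 sn])
    finally show "\<bar>h t\<bar> \<le> (\<Sum>i. norm (b i * (R/2)^i))" .
  qed
qed

lemma poly_monom_sum: fixes a :: "nat \<Rightarrow> real" shows "poly (\<Sum>i<m. monom (a i) i) t = (\<Sum>i<m. a i * t^i)"
  by (simp add: poly_sum poly_monom)

lemma PS_trunc:
  assumes "PS g R a"
  shows "\<exists>\<delta> K. \<delta> > 0 \<and> (\<forall>t. \<bar>t\<bar> < \<delta> \<longrightarrow> \<bar>g t - poly (\<Sum>i<m. monom (a i) i) t\<bar> \<le> K * \<bar>t\<bar>^m)"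
proof -
  have R: "R > 0" using assms unfolding PS_def by simp
  define q where "q = (\<Sum>i<m. monom (a i) i)"
  define a' where "a' = (\<lambda>i. if i < m then 0 else a i)"
  have "PS (\<lambda>t. g t - poly q t) R a'"
    unfolding PS_def
  proof (intro conjI R allI impI)
    fix t :: real assume t: "\<bar>t\<bar> < R"
    have s: "(\<lambda>i. a i * t^i) sums g t" using assms t unfolding PS_def by blast
    have "(\<lambda>i. (if i < m then a i else 0) * t^i) sums (\<Sum>i\<in>{..<m}. (if i < m then a i else 0) * t^i)"
      by (rule sums_finite) auto
    hence s2: "(\<lambda>i. (if i < m then a i else 0) * t^i) sums poly q t"
      by (simp add: q_def poly_monom_sum)
    have "(\<lambda>i. a i * t^i - (if i < m then a i else 0) * t^i) sums (g t - poly q t)"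
      by (rule sums_diff[OF s s2])
    moreover have "\<And>i. a i * t^i - (if i < m then a i else 0) * t^i = a' i * t^i"
      by (simp add: a'_def)
    ultimately show "(\<lambda>i. a' i * t^i) sums (g t - poly q t)" by simp
  qed
  from PS_div[OF this, of m] obtain h where
    h: "PS h R (\<lambda>i. a' (i+m))" "\<forall>t. \<bar>t\<bar> < R \<longrightarrow> g t - poly q t = t^m * h t"
    by (auto simp: a'_def)
  obtain K where K: "\<forall>t. \<bar>t\<bar> \<le> R/2 \<longrightarrow> \<bar>h t\<bar> \<le> K" using PS_bound[OF h(1)] by blast
  have "\<forall>t. \<bar>t\<bar> < R/2 \<longrightarrow> \<bar>g t - poly q t\<bar> \<le> K * \<bar>t\<bar>^m"
  proof (intro allI impI)
    fix t :: real assume t: "\<bar>t\<bar> < R/2"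
    have "\<bar>g t - poly q t\<bar> = \<bar>t\<bar>^m * \<bar>h t\<bar>" using h(2) t R by (simp add: abs_mult power_abs)
    also have "\<dots> \<le> \<bar>t\<bar>^m * K" using K t by (intro mult_left_mono) auto
    finally show "\<bar>g t - poly q t\<bar> \<le> K * \<bar>t\<bar>^m" by (simp add: mult.commute)
  qed
  thus ?thesis
    using R unfolding q_def by (intro exI[of _ "R/2"] exI[of _ K]) auto
qed

lemma PS_Af:
  assumes "PS g R a"
  shows "Af g"
  unfolding Af_def using PS_trunc[OF assms] by blast

lemma Xp_bigo_x:
  fixes x :: "nat \<Rightarrow> real"
  assumes x: "x \<longlonglongrightarrow> 0" and "Xp x f 0"
  shows "f \<in> O(x)"
proof -
  obtain p where p: "poly p 0 = 0" "(\<lambda>n. f n - poly p (x n)) \<in> O(\<lambda>n. x n ^ 1)"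
    using assms(2) unfolding Xp_def by blast
  obtain c p' where pc: "p = pCons c p'" by (rule pCons_cases)
  have c: "c = 0" using p(1) pc by simp
  have "(\<lambda>n. x n * poly p' (x n)) \<in> O(x)"
    by (rule landau_o.big_1_mult[OF landau_o.big_refl poly_bigo1[OF x]])
  hence "(\<lambda>n. poly p (x n)) \<in> O(x)" using pc c by simp
  from sum_in_bigo(1)[OF _ this, of "\<lambda>n. f n - poly p (x n)"] p(2)
  show ?thesis by simp
qed

lemma Xp_compose:
  fixes x :: "nat \<Rightarrow> real"
  assumes x: "x \<longlonglongrightarrow> 0" and f: "Xp x f 0" and g: "Af g"
  shows "Xp x (\<lambda>n. g (f n)) (g 0)"
  unfolding Xp_def
proof
  fix m
  obtain q \<delta> K where qd: "\<delta> > 0" "\<forall>t. \<bar>t\<bar> < \<delta> \<longrightarrow> \<bar>g t - poly q t\<bar> \<le> K * \<bar>t\<bar>^Suc m"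
    using g unfolding Af_def by blast
  have "\<bar>g 0 - poly q 0\<bar> \<le> K * \<bar>0\<bar>^Suc m" using qd(2)[rule_format, of 0] qd(1) by simp
  hence q0: "poly q 0 = g 0" by simp
  have ft: "f \<longlonglongrightarrow> 0" by (rule Xp_tendsto[OF x f])
  have "eventually (\<lambda>n. dist (f n) 0 < \<delta>) sequentially" using ft qd(1) by (rule tendstoD)
  hence "eventually (\<lambda>n. norm (g (f n) - poly q (f n)) \<le> K * norm (f n ^ Suc m)) sequentially"
  proof eventually_elim
    case (elim n)
    hence "\<bar>f n\<bar> < \<delta>" by simp
    hence "\<bar>g (f n) - poly q (f n)\<bar> \<le> K * \<bar>f n\<bar>^Suc m" using qd(2) by blast
    thus ?case by (simp only: real_norm_def power_abs)
  qed
  hence A: "(\<lambda>n. g (f n) - poly q (f n)) \<in> O(\<lambda>n. f n ^ Suc m)" by (rule bigoI)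
  have "(\<lambda>n. f n ^ Suc m) \<in> O(\<lambda>n. x n ^ Suc m)"
    by (rule landau_o.big_power[OF Xp_bigo_x[OF x f]])
  also have "(\<lambda>n. x n ^ Suc m) \<in> O(\<lambda>n. x n ^ m)" by (rule xpow_mono[OF x]) simp
  finally have A': "(\<lambda>n. g (f n) - poly q (f n)) \<in> O(\<lambda>n. x n ^ m)"
    by (rule landau_o.big_trans[OF A])
  have "Xp x (\<lambda>n. poly q (f n)) (poly q 0)" by (rule Xp_poly[OF x f])
  then obtain p where p: "poly p 0 = g 0" "(\<lambda>n. poly q (f n) - poly p (x n)) \<in> O(\<lambda>n. x n ^ m)"
    using q0 unfolding Xp_def by metis
  from sum_in_bigo(1)[OF A' p(2)]
  show "\<exists>p. poly p 0 = g 0 \<and> (\<lambda>n. g (f n) - poly p (x n)) \<in> O(\<lambda>n. x n ^ m)"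
    using p(1) by (intro exI[of _ p]) simp
qed



lemma PS_add:
  assumes "PS f R a" "PS g R b"
  shows "PS (\<lambda>t. f t + g t) R (\<lambda>i. a i + b i)"
  unfolding PS_def
proof (intro conjI allI impI)
  show "R > 0" using assms(1) unfolding PS_def by simp
  fix t :: real assume t: "\<bar>t\<bar> < R"
  have "(\<lambda>i. a i * t^i + b i * t^i) sums (f t + g t)"
    by (rule sums_add) (use assms t in \<open>auto simp: PS_def\<close>)
  thus "(\<lambda>i. (a i + b i) * t^i) sums (f t + g t)" by (simp add: distrib_right)
qed

lemma PS_cmult:
  assumes "PS g R a"
  shows "PS (\<lambda>t. c * g t) R (\<lambda>i. c * a i)"
  unfolding PS_def
proof (intro conjI allI impI)
  show "R > 0" using assms(1) unfolding PS_def by simp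
  fix t :: real assume t: "\<bar>t\<bar> < R"
  have "(\<lambda>i. c * (a i * t^i)) sums (c * g t)"
    by (rule sums_mult) (use assms t in \<open>auto simp: PS_def\<close>)
  thus "(\<lambda>i. c * a i * t^i) sums (c * g t)" by (simp add: mult.assoc)
qed

lemma PS_shrink:
  assumes "PS g R a" "0 < R'" "R' \<le> R"
  shows "PS g R' a"
  using assms unfolding PS_def by auto

lemma PS_scale2:
  assumes "PS g R a"
  shows "PS (\<lambda>t. g (2*t)) (R/2) (\<lambda>i. a i * 2^i)"
  unfolding PS_def
proof (intro conjI allI impI)
  show "R/2 > 0" using assms(1) unfolding PS_def by simp
  fix t :: real assume t: "\<bar>t\<bar> < R/2"
  have "\<bar>2*t\<bar> < R" using t by simp
  hence "(\<lambda>i. a i * (2*t)^i) sums g (2*t)" using assms unfolding PS_def by blast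
  thus "(\<lambda>i. a i * 2^i * t^i) sums g (2*t)" by (simp add: power_mult_distrib mult.assoc)
qed

lemma PS_const:
  assumes "R > 0"
  shows "PS (\<lambda>t. c) R (\<lambda>i. if i = 0 then c else 0)"
  unfolding PS_def
proof (intro conjI allI impI assms)
  fix t :: real
  have "(\<lambda>i. if i = 0 then c * t^i else 0) sums (c * t^0)" by (rule sums_single)
  moreover have "\<And>i. (if i = 0 then c else 0) * t^i = (if i = 0 then c * t^i else 0)" by simp
  ultimately show "(\<lambda>i. (if i = 0 then c else 0) * t^i) sums c" by simp
qed

lemma PS_exp: "PS exp 1 (\<lambda>i. 1 / fact i)"
  unfolding PS_def
proof (intro conjI allI impI)
  fix t :: real
  have "(\<lambda>n. t^n /\<^sub>R fact n) sums exp t" by (rule exp_converges)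
  moreover have "\<And>n. t^n /\<^sub>R fact n = 1 / fact n * t^n" by (simp add: divide_inverse mult.commute)
  ultimately show "(\<lambda>i. 1 / fact i * t^i) sums exp t" by simp
qed simp

lemma PS_ln: "PS (\<lambda>t. ln (1 + t)) 1 (\<lambda>i. - ((-1)^i) / real i)"
  unfolding PS_def
proof (intro conjI allI impI)
  fix t :: real assume "\<bar>t\<bar> < 1"
  hence "(\<lambda>n. - ((-t)^n) / of_nat n) sums ln (1 + t)" by (rule ln_series')
  moreover have "(\<lambda>n. - ((-t)^n) / of_nat n) = (\<lambda>i. - ((-1)^i) / real i * t^i)"
  proof
    fix n
    have "(-t)^n = (-1)^n * t^n" by (rule power_minus)
    thus "- ((-t)^n) / of_nat n = - ((-1)^n) / real n * t^n" by (simp add: divide_inverse mult_ac)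
  qed
  ultimately show "(\<lambda>i. - ((-1)^i) / real i * t^i) sums ln (1 + t)" by simp
qed simp

lemma PS_powr: "PS (\<lambda>t. (1 + t) powr a) 1 (\<lambda>i. a gchoose i)"
  unfolding PS_def using gen_binomial_real by auto

lemma PS_geom: "PS (\<lambda>t. 1 / (1 + t)) 1 (\<lambda>i. (-1)^i)"
  unfolding PS_def
proof (intro conjI allI impI)
  fix t :: real assume "\<bar>t\<bar> < 1"
  hence "(\<lambda>n. (-t)^n) sums (1 / (1 - (-t)))" by (intro geometric_sums) simp
  moreover have "\<And>n. (-t)^n = (-1)^n * t^n" by (simp add: power_minus[of t])
  ultimately show "(\<lambda>i. (-1)^i * t^i) sums (1 / (1 + t))" by simp
qed simp

lemma kappa_exists:
  "\<exists>\<kappa>. Af \<kappa> \<and> (\<forall>t. \<bar>t\<bar> < 1/2 \<longrightarrow> 1 + (1 + 2*t) powr a + (-2) * (1 + t) powr a = t^2 * \<kappa> t)"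
proof -
  have p1: "PS (\<lambda>t. 1) (1/2) (\<lambda>i. if i = 0 then 1 else 0)" by (rule PS_const) simp
  have p2: "PS (\<lambda>t. (1 + 2*t) powr a) (1/2) (\<lambda>i. (a gchoose i) * 2^i)"
    using PS_scale2[OF PS_powr[of a]] by simp
  have p3: "PS (\<lambda>t. (-2) * (1 + t) powr a) (1/2) (\<lambda>i. (-2) * (a gchoose i))"
    by (rule PS_cmult, rule PS_shrink[OF PS_powr]) auto
  have P: "PS (\<lambda>t. 1 + (1 + 2*t) powr a + (-2) * (1 + t) powr a) (1/2)
     (\<lambda>i. (if i = 0 then 1 else 0) + (a gchoose i) * 2^i + (-2) * (a gchoose i))"
    by (intro PS_add p1 p2 p3)
  have "\<forall>i<2. (\<lambda>i. (if i = 0 then 1 else 0) + (a gchoose i) * 2^i + (-2) * (a gchoose i)) i = (0::real)"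
  proof (intro allI impI)
    fix i :: nat assume "i < 2"
    hence "i = 0 \<or> i = 1" by auto
    thus "(\<lambda>i. (if i = 0 then 1 else 0) + (a gchoose i) * 2^i + (-2) * (a gchoose i)) i = (0::real)"
      by auto
  qed
  from PS_div[OF P this] show ?thesis using PS_Af by blast
qed

lemma lam_exists:
  "\<exists>h. Af h \<and> (\<forall>t. \<bar>t\<bar> < 1/2 \<longrightarrow> ln (1 + 2*t) + (-2) * ln (1 + t) = t^2 * h t)"
proof -
  have p2: "PS (\<lambda>t. ln (1 + 2*t)) (1/2) (\<lambda>i. - ((-1)^i) / real i * 2^i)"
    using PS_scale2[OF PS_ln] by simp
  have p3: "PS (\<lambda>t. (-2) * ln (1 + t)) (1/2) (\<lambda>i. (-2) * (- ((-1)^i) / real i))"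
    by (rule PS_cmult, rule PS_shrink[OF PS_ln]) auto
  have P: "PS (\<lambda>t. ln (1 + 2*t) + (-2) * ln (1 + t)) (1/2)
     (\<lambda>i. - ((-1)^i) / real i * 2^i + (-2) * (- ((-1)^i) / real i))"
    by (intro PS_add p2 p3)
  have "\<forall>i<2. (\<lambda>i. - ((-1)^i) / real i * 2^i + (-2) * (- ((-1)^i) / real i)) i = (0::real)"
  proof (intro allI impI)
    fix i :: nat assume "i < 2"
    hence "i = 0 \<or> i = 1" by auto
    thus "(\<lambda>i. - ((-1)^i) / real i * 2^i + (-2) * (- ((-1)^i) / real i)) i = (0::real)"
      by auto
  qed
  from PS_div[OF P this] show ?thesis using PS_Af by blast
qed

lemma Xp_inverse:
  fixes x :: "nat \<Rightarrow> real"
  assumes x: "x \<longlonglongrightarrow> 0" and f: "Xp x f L" and L: "L \<noteq> 0"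
  shows "Xp x (\<lambda>n. 1 / f n) (1 / L)"
proof -
  have "Xp x (\<lambda>n. (1/L) * f n + (-1)) ((1/L) * L + (-1))"
    by (intro Xp_add Xp_mult[OF x] Xp_const f)
  hence f': "Xp x (\<lambda>n. (1/L) * f n + (-1)) 0" using L by simp
  have "Xp x (\<lambda>n. 1 / (1 + ((1/L) * f n + (-1)))) (1 / (1 + 0))"
    using Xp_compose[OF x f' PS_Af[OF PS_geom]] by simp
  hence E1: "Xp x (\<lambda>n. (1/L) * (1 / (1 + ((1/L) * f n + (-1))))) ((1/L) * (1 / (1 + 0)))"
    by (intro Xp_mult[OF x] Xp_const)
  have eq: "(\<lambda>n. (1/L) * (1 / (1 + ((1/L) * f n + (-1))))) = (\<lambda>n. 1 / f n)"
  proof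
    fix n
    have "1 + ((1/L) * f n + (-1)) = f n / L" by simp
    hence "(1/L) * (1 / (1 + ((1/L) * f n + (-1)))) = (1/L) * (L / f n)" by simp
    also have "\<dots> = 1 / f n" using L by simp
    finally show "(1/L) * (1 / (1 + ((1/L) * f n + (-1)))) = 1 / f n" .
  qed
  from E1 show ?thesis unfolding eq by simp
qed



definition xs :: "nat \<Rightarrow> nat \<Rightarrow> real" where "xs \<rho> n = real n powr (- 1 / real \<rho>)"
definition ys :: "nat \<Rightarrow> real" where "ys n = 1 / real n"

lemma Xp_scale: "Xp x f L \<Longrightarrow> Xp x (\<lambda>n. c * f n) (c * L)"
  unfolding Xp_def
proof
  fix m assume "\<forall>m. \<exists>p. poly p 0 = L \<and> (\<lambda>n. f n - poly p (x n)) \<in> O(\<lambda>n. x n ^ m)"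
  then obtain p where p: "poly p 0 = L" "(\<lambda>n. f n - poly p (x n)) \<in> O(\<lambda>n. x n ^ m)" by blast
  have "(\<lambda>n. c * (f n - poly p (x n))) \<in> O(\<lambda>n. x n ^ m)"
    using p(2) by (cases "c = 0") simp_all
  thus "\<exists>p. poly p 0 = c * L \<and> (\<lambda>n. c * f n - poly p (x n)) \<in> O(\<lambda>n. x n ^ m)"
    using p(1) by (intro exI[of _ "smult c p"]) (simp add: algebra_simps)
qed

context
  fixes \<rho> :: nat
  assumes \<rho>: "\<rho> > 0"
begin

lemma xs_tendsto: "xs \<rho> \<longlonglongrightarrow> 0"
  unfolding xs_def
  by (rule tendsto_neg_powr[OF _ filterlim_real_sequentially]) (use \<rho> in simp)

lemma xs_pow: "n > 0 \<Longrightarrow> xs \<rho> n ^ k = real n powr (- real k / real \<rho>)"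
proof -
  assume n: "n > 0"
  have "xs \<rho> n ^ k = xs \<rho> n powr real k" unfolding xs_def using n by (simp add: powr_realpow)
  also have "\<dots> = real n powr (- 1 / real \<rho> * real k)" unfolding xs_def by (rule powr_powr)
  finally show ?thesis by simp
qed

lemma xs_pos: "n > 0 \<Longrightarrow> xs \<rho> n > 0"
  unfolding xs_def by simp

lemma ys_Ex: "Xp (xs \<rho>) ys 0"
proof -
  have "Xp (xs \<rho>) (\<lambda>n. xs \<rho> n ^ \<rho>) (0 ^ \<rho>)" by (rule Xp_power[OF xs_tendsto Xp_id])
  moreover have "(0::real) ^ \<rho> = 0" by (rule zero_power) (use \<rho> in simp)
  ultimately have "Xp (xs \<rho>) (\<lambda>n. xs \<rho> n ^ \<rho>) 0" by simp
  moreover have "eventually (\<lambda>n. xs \<rho> n ^ \<rho> = ys n) sequentially"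
    using eventually_gt_at_top[of 0]
  proof eventually_elim
    case (elim n)
    have "xs \<rho> n ^ \<rho> = real n powr (- 1)" using xs_pow[OF elim, of \<rho>] \<rho> by simp
    also have "\<dots> = ys n" unfolding ys_def using elim by (simp add: powr_minus_divide)
    finally show ?case .
  qed
  ultimately show ?thesis by (rule Xp_cong)
qed

lemma ys_small: "eventually (\<lambda>n. \<bar>ys n\<bar> < 1/2 \<and> n > 0) sequentially"
  using eventually_ge_at_top[of 3]
proof eventually_elim
  case (elim n)
  hence "real n \<ge> 3" by simp
  thus ?case unfolding ys_def using elim by (simp add: field_simps)
qed

lemma Xp_comp_scaled:
  assumes "Af g"
  shows "Xp (xs \<rho>) (\<lambda>n. g (c * ys n)) (g 0)"
proof -
  have "Xp (xs \<rho>) (\<lambda>n. c * ys n) (c * 0)" by (rule Xp_scale[OF ys_Ex])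
  hence "Xp (xs \<rho>) (\<lambda>n. c * ys n) 0" by simp
  from Xp_compose[OF xs_tendsto this assms] show ?thesis .
qed

lemma Lam_Ex:
  "Xp (xs \<rho>) (\<lambda>n. real n * ln (real n) + (real n + 2) * ln (real n + 2) - 2 * ((real n + 1) * ln (real n + 1))) 0"
proof -
  obtain h where h: "Af h" "\<forall>t. \<bar>t\<bar> < 1/2 \<longrightarrow> ln (1 + 2*t) + (-2) * ln (1 + t) = t^2 * h t"
    using lam_exists by blast
  have l1: "Af (\<lambda>t. ln (1 + t))" by (rule PS_Af[OF PS_ln])
  have A1: "Xp (xs \<rho>) (\<lambda>n. ys n * h (1 * ys n)) (0 * h 0)"
    by (rule Xp_mult[OF xs_tendsto ys_Ex Xp_comp_scaled[OF h(1)]])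
  have A2: "Xp (xs \<rho>) (\<lambda>n. 2 * ln (1 + 2 * ys n)) (2 * ln (1 + 0))"
    by (rule Xp_scale[OF Xp_comp_scaled[OF l1]])
  have A3: "Xp (xs \<rho>) (\<lambda>n. (-2) * ln (1 + 1 * ys n)) ((-2) * ln (1 + 0))"
    by (rule Xp_scale[OF Xp_comp_scaled[OF l1]])
  have "Xp (xs \<rho>) (\<lambda>n. ys n * h (1 * ys n) + 2 * ln (1 + 2 * ys n) + (-2) * ln (1 + 1 * ys n))
      (0 * h 0 + 2 * ln (1 + 0) + (-2) * ln (1 + 0))"
    by (intro Xp_add A1 A2 A3)
  hence E: "Xp (xs \<rho>) (\<lambda>n. ys n * h (ys n) + 2 * ln (1 + 2 * ys n) + (-2) * ln (1 + ys n)) 0"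
    by simp
  have "eventually (\<lambda>n. ys n * h (ys n) + 2 * ln (1 + 2 * ys n) + (-2) * ln (1 + ys n) =
     real n * ln (real n) + (real n + 2) * ln (real n + 2) - 2 * ((real n + 1) * ln (real n + 1))) sequentially"
    using ys_small
  proof eventually_elim
    case (elim n)
    define Y where "Y = ys n"
    have n: "real n > 0" using elim by simp
    have Y: "real n * Y = 1" unfolding Y_def ys_def using n by simp
    have Y0: "Y > 0" unfolding Y_def ys_def using n by simp
    have e1: "ln (real n + 2) = ln (real n) + ln (1 + 2 * Y)"
    proof -
      have "real n + 2 = real n * (1 + 2 * Y)" using Y by (simp add: algebra_simps)
      thus ?thesis using n Y0 by (simp add: ln_mult_pos)
    qed
    have e2: "ln (real n + 1) = ln (real n) + ln (1 + Y)"
    proof -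
      have "real n + 1 = real n * (1 + Y)" using Y by (simp add: algebra_simps)
      thus ?thesis using n Y0 by (simp add: ln_mult_pos)
    qed
    have e3: "ln (1 + 2 * Y) = 2 * ln (1 + Y) + Y^2 * h Y"
      using h(2)[rule_format, of Y] elim unfolding Y_def by simp
    have "real n * ln (real n) + (real n + 2) * ln (real n + 2) - 2 * ((real n + 1) * ln (real n + 1))
        = real n * Y * (Y * h Y) + 2 * ln (1 + 2 * Y) - 2 * ln (1 + Y)"
      unfolding e1 e2 e3 by (simp add: algebra_simps power2_eq_square)
    also have "\<dots> = Y * h Y + 2 * ln (1 + 2 * Y) + (-2) * ln (1 + Y)" using Y by simp
    finally show ?case unfolding Y_def by simp
  qed
  thus ?thesis by (rule Xp_cong[OF E])
qed

lemma Pi_Ex: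
  assumes j: "1 \<le> j" "j \<le> \<rho>"
  shows "Xp (xs \<rho>) (\<lambda>n. real n powr (real j / real \<rho>) + (real n + 2) powr (real j / real \<rho>)
            - 2 * (real n + 1) powr (real j / real \<rho>)) 0"
proof -
  define \<alpha> where "\<alpha> = real j / real \<rho>"
  obtain \<kappa> where k: "Af \<kappa>" "\<forall>t. \<bar>t\<bar> < 1/2 \<longrightarrow> 1 + (1 + 2*t) powr \<alpha> + (-2) * (1 + t) powr \<alpha> = t^2 * \<kappa> t"
    using kappa_exists by blast
  have "Xp (xs \<rho>) (\<lambda>n. xs \<rho> n ^ (2*\<rho> - j) * \<kappa> (1 * ys n)) (0 ^ (2*\<rho> - j) * \<kappa> 0)"
    by (intro Xp_mult[OF xs_tendsto] Xp_power[OF xs_tendsto Xp_id] Xp_comp_scaled k(1))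
  moreover have "(0::real) ^ (2*\<rho> - j) = 0" by (rule zero_power) (use j in simp)
  ultimately have E: "Xp (xs \<rho>) (\<lambda>n. xs \<rho> n ^ (2*\<rho> - j) * \<kappa> (ys n)) 0" by simp
  have "eventually (\<lambda>n. xs \<rho> n ^ (2*\<rho> - j) * \<kappa> (ys n) =
     real n powr \<alpha> + (real n + 2) powr \<alpha> - 2 * (real n + 1) powr \<alpha>) sequentially"
    using ys_small
  proof eventually_elim
    case (elim n)
    define Y where "Y = ys n"
    have n: "real n > 0" using elim by simp
    have Y: "real n * Y = 1" unfolding Y_def ys_def using n by simp
    have Y0: "Y > 0" unfolding Y_def ys_def using n by simp
    have e1: "(real n + 2) powr \<alpha> = real n powr \<alpha> * (1 + 2 * Y) powr \<alpha>"
    proof -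
      have "real n + 2 = real n * (1 + 2 * Y)" using Y by (simp add: algebra_simps)
      thus ?thesis using n Y0 by (simp add: powr_mult)
    qed
    have e2: "(real n + 1) powr \<alpha> = real n powr \<alpha> * (1 + Y) powr \<alpha>"
    proof -
      have "real n + 1 = real n * (1 + Y)" using Y by (simp add: algebra_simps)
      thus ?thesis using n Y0 by (simp add: powr_mult)
    qed
    have e3: "1 + (1 + 2*Y) powr \<alpha> + (-2) * (1 + Y) powr \<alpha> = Y^2 * \<kappa> Y"
      using k(2)[rule_format, of Y] elim unfolding Y_def by simp
    have e4: "real n powr \<alpha> * Y^2 = xs \<rho> n ^ (2*\<rho> - j)"
    proof -
      have "Y = real n powr (-1)" unfolding Y_def ys_def using n by (simp add: powr_minus_divide)
      hence "Y^2 = real n powr (-1) * real n powr (-1)" by (simp add: power2_eq_square)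
      also have "\<dots> = real n powr (-1 + -1)" by (rule powr_add[symmetric])
      also have "\<dots> = real n powr (-2)" by (rule arg_cong[where f="\<lambda>a. real n powr a"]) simp
      finally have "Y^2 = real n powr (-2)" .
      hence "real n powr \<alpha> * Y^2 = real n powr \<alpha> * real n powr (-2)" by simp
      also have "\<dots> = real n powr (\<alpha> + (-2))" by (rule powr_add[symmetric])
      also have "\<alpha> + (-2) = - real (2*\<rho> - j) / real \<rho>"
        unfolding \<alpha>_def using j \<rho> by (simp add: of_nat_diff field_simps)
      also have "real n powr \<dots> = xs \<rho> n ^ (2*\<rho> - j)" using xs_pow[of n "2*\<rho> - j"] elim by simp
      finally show ?thesis .
    qed
    have "real n powr \<alpha> + (real n + 2) powr \<alpha> - 2 * (real n + 1) powr \<alpha>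
       = real n powr \<alpha> * (1 + (1 + 2*Y) powr \<alpha> + (-2) * (1 + Y) powr \<alpha>)"
      unfolding e1 e2 by (simp add: algebra_simps)
    also have "\<dots> = real n powr \<alpha> * Y^2 * \<kappa> Y" unfolding e3 by simp
    also have "\<dots> = xs \<rho> n ^ (2*\<rho> - j) * \<kappa> Y" unfolding e4 ..
    finally show ?case unfolding Y_def by simp
  qed
  from Xp_cong[OF E this] show ?thesis unfolding \<alpha>_def .
qed

end


lemma tend_bigo1: "(f \<longlongrightarrow> (L::real)) sequentially \<Longrightarrow> f \<in> O(\<lambda>_. 1)"
  by (rule bigoI_tendsto[where c=L]) simp_all

lemma PS_poly: "PS (poly p) 1 (coeff p)"
  unfolding PS_def
proof (intro conjI allI impI)
  fix t :: real
  have "(\<lambda>i. coeff p i * t^i) sums (\<Sum>i\<in>{..degree p}. coeff p i * t^i)"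
    by (rule sums_finite) (auto simp: coeff_eq_0)
  thus "(\<lambda>i. coeff p i * t^i) sums poly p t" by (simp add: poly_altdef)
qed simp

context
  fixes \<rho> :: nat
  assumes \<rho>: "\<rho> > 0"
begin

lemma D_Ex: "Xp (xs \<rho>) (\<lambda>n. Qexp \<rho> \<mu> n + Qexp \<rho> \<mu> (n+2) - 2 * Qexp \<rho> \<mu> (n+1)) 0"
proof -
  have S: "Xp (xs \<rho>) (\<lambda>n. \<Sum>j\<in>{1..\<rho>}. \<mu> j * (real n powr (real j / real \<rho>) + (real n + 2) powr (real j / real \<rho>)
            - 2 * (real n + 1) powr (real j / real \<rho>))) (\<Sum>j\<in>{1..\<rho>}. \<mu> j * 0)"
    by (rule Xp_sum[OF xs_tendsto[OF \<rho>]], rule Xp_scale, rule Pi_Ex[OF \<rho>]) auto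
  have L: "Xp (xs \<rho>) (\<lambda>n. \<mu> 0 * (real n * ln (real n) + (real n + 2) * ln (real n + 2) - 2 * ((real n + 1) * ln (real n + 1)))) (\<mu> 0 * 0)"
    by (rule Xp_scale[OF Lam_Ex[OF \<rho>]])
  have E: "Xp (xs \<rho>) (\<lambda>n. \<mu> 0 * (real n * ln (real n) + (real n + 2) * ln (real n + 2) - 2 * ((real n + 1) * ln (real n + 1)))
     + (\<Sum>j\<in>{1..\<rho>}. \<mu> j * (real n powr (real j / real \<rho>) + (real n + 2) powr (real j / real \<rho>)
            - 2 * (real n + 1) powr (real j / real \<rho>)))) 0"
    using Xp_add[OF L S] by simp
  have sumeq: "(\<Sum>j\<in>A. \<mu> j * (f j + g j - 2 * h j)) =
      (\<Sum>j\<in>A. \<mu> j * f j) + (\<Sum>j\<in>A. \<mu> j * g j) - 2 * (\<Sum>j\<in>A. \<mu> j * h j)" for A and f g h :: "nat \<Rightarrow> real"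
    by (simp add: sum.distrib sum_subtractf sum_distrib_left algebra_simps)
  show ?thesis
  proof (rule Xp_cong[OF E], intro always_eventually allI)
    fix n
    show "\<mu> 0 * (real n * ln (real n) + (real n + 2) * ln (real n + 2) - 2 * ((real n + 1) * ln (real n + 1)))
     + (\<Sum>j\<in>{1..\<rho>}. \<mu> j * (real n powr (real j / real \<rho>) + (real n + 2) powr (real j / real \<rho>)
            - 2 * (real n + 1) powr (real j / real \<rho>))) =
      Qexp \<rho> \<mu> n + Qexp \<rho> \<mu> (n+2) - 2 * Qexp \<rho> \<mu> (n+1)"
      unfolding sumeq Qexp_def by (simp add: algebra_simps)
  qed
qed

lemma U_Ex: "Xp (xs \<rho>) (\<lambda>n. exp (Qexp \<rho> \<mu> n + Qexp \<rho> \<mu> (n+2) - 2 * Qexp \<rho> \<mu> (n+1))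
      * (1 + 2 * ys n) powr r * (1 + 1 * ys n) powr (-2*r)) 1"
proof -
  have "Xp (xs \<rho>) (\<lambda>n. exp (Qexp \<rho> \<mu> n + Qexp \<rho> \<mu> (n+2) - 2 * Qexp \<rho> \<mu> (n+1))
      * (1 + 2 * ys n) powr r * (1 + 1 * ys n) powr (-2*r)) (exp 0 * (1 + 0) powr r * (1 + 0) powr (-2*r))"
    by (intro Xp_mult[OF xs_tendsto[OF \<rho>]] Xp_compose[OF xs_tendsto[OF \<rho>] D_Ex PS_Af[OF PS_exp]]
          Xp_comp_scaled[OF \<rho> PS_Af[OF PS_powr]])
  thus ?thesis by simp
qed

lemma B_Ex: "Xp (xs \<rho>) (\<lambda>n. \<Sum>s=0..M. b s * real (n + k) powr (- real s / real \<rho>)) (b 0)"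
proof -
  have "Xp (xs \<rho>) (\<lambda>n. \<Sum>s\<in>{0..M}. b s * xs \<rho> n ^ s * (1 + real k * ys n) powr (- real s / real \<rho>))
      (\<Sum>s\<in>{0..M}. b s * 0 ^ s * (1 + 0) powr (- real s / real \<rho>))"
    by (rule Xp_sum[OF xs_tendsto[OF \<rho>]], intro Xp_mult[OF xs_tendsto[OF \<rho>]] Xp_scale
        Xp_power[OF xs_tendsto[OF \<rho>] Xp_id] Xp_comp_scaled[OF \<rho> PS_Af[OF PS_powr]])
  moreover have "(\<Sum>s\<in>{0..M}. b s * 0 ^ s * (1 + 0) powr (- real s / real \<rho>)) = b 0"
  proof -
    have "{0..M} = insert 0 {1..M}" by auto
    hence "(\<Sum>s\<in>{0..M}. b s * (0::real) ^ s * (1 + 0) powr (- real s / real \<rho>)) =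
       b 0 + (\<Sum>s\<in>{1..M}. b s * 0 ^ s * (1 + 0) powr (- real s / real \<rho>))" by simp
    also have "(\<Sum>s\<in>{1..M}. b s * (0::real) ^ s * (1 + 0) powr (- real s / real \<rho>)) = 0"
      by (rule sum.neutral) auto
    finally show ?thesis by simp
  qed
  ultimately have E: "Xp (xs \<rho>) (\<lambda>n. \<Sum>s\<in>{0..M}. b s * xs \<rho> n ^ s * (1 + real k * ys n) powr (- real s / real \<rho>)) (b 0)"
    by simp
  show ?thesis
  proof (rule Xp_cong[OF E])
    show "eventually (\<lambda>n. (\<Sum>s\<in>{0..M}. b s * xs \<rho> n ^ s * (1 + real k * ys n) powr (- real s / real \<rho>)) =
       (\<Sum>s=0..M. b s * real (n + k) powr (- real s / real \<rho>))) sequentially"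
      using eventually_gt_at_top[of 0]
    proof eventually_elim
      case (elim n)
      have n: "real n > 0" using elim by simp
      have "real (n + k) = real n * (1 + real k * ys n)" unfolding ys_def using n by (simp add: field_simps)
      hence "real (n + k) powr (- real s / real \<rho>) = real n powr (- real s / real \<rho>) * (1 + real k * ys n) powr (- real s / real \<rho>)" for s
        using n by (simp add: powr_mult ys_def)
      thus ?case using xs_pow[OF \<rho> elim] by (simp add: mult.assoc)
    qed
  qed
qed

lemma shift_small:
  assumes "f \<in> o(\<lambda>n. xs \<rho> n ^ M)"
  shows "(\<lambda>n. f (Suc n)) \<in> o(\<lambda>n. xs \<rho> n ^ M)"
proof -
  have "(\<lambda>n. f (Suc n)) \<in> o(\<lambda>n. xs \<rho> (Suc n) ^ M)"
    by (rule landau_o.small.compose[OF assms filterlim_Suc])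
  moreover have "(\<lambda>n. xs \<rho> (Suc n) ^ M) \<in> O(\<lambda>n. xs \<rho> n ^ M)"
  proof (rule bigoI[where c=1])
    show "eventually (\<lambda>n. norm (xs \<rho> (Suc n) ^ M) \<le> 1 * norm (xs \<rho> n ^ M)) sequentially"
      using eventually_gt_at_top[of 0]
    proof eventually_elim
      case (elim n)
      have "xs \<rho> (Suc n) \<le> xs \<rho> n" unfolding xs_def
        by (rule powr_mono2') (use elim \<rho> in auto)
      hence "xs \<rho> (Suc n) ^ M \<le> xs \<rho> n ^ M"
        by (intro power_mono) (use xs_pos[OF \<rho>, of "Suc n"] in auto)
      thus ?case using xs_pos[OF \<rho>, of "Suc n"] xs_pos[OF \<rho>, of n] elim by simp
    qed
  qed
  ultimately show ?thesis by (rule landau_o.small_big_trans)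
qed

end


lemma U_identity:
  assumes \<rho>: "\<rho> > 0" and n: "n > 0"
  shows "(exp (Qexp \<rho> \<mu> n) * real n powr r) * (exp (Qexp \<rho> \<mu> (n+2)) * real (n+2) powr r)
     / (exp (Qexp \<rho> \<mu> (n+1)) * real (n+1) powr r)^2
   = exp (Qexp \<rho> \<mu> n + Qexp \<rho> \<mu> (n+2) - 2 * Qexp \<rho> \<mu> (n+1))
      * (1 + 2 * ys n) powr r * (1 + 1 * ys n) powr (-2*r)"
proof -
  define A where "A = Qexp \<rho> \<mu> n"
  define B where "B = Qexp \<rho> \<mu> (n+1)"
  define C where "C = Qexp \<rho> \<mu> (n+2)"
  define Y where "Y = ys n"
  define N where "N = real n powr r"
  have nn: "real n > 0" using n by simp
  have Y: "real n * Y = 1" "Y > 0" unfolding Y_def ys_def using nn by simp_all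
  have N: "N > 0" unfolding N_def using nn by simp
  have p2: "real (n+2) powr r = N * (1 + 2 * Y) powr r"
  proof -
    have "real (n+2) = real n * (1 + 2 * Y)" using Y by (simp add: algebra_simps)
    thus ?thesis unfolding N_def using nn Y by (simp add: powr_mult)
  qed
  have p1: "real (n+1) powr r = N * (1 + 1 * Y) powr r"
  proof -
    have "real (n+1) = real n * (1 + 1 * Y)" using Y by (simp add: algebra_simps)
    thus ?thesis unfolding N_def using nn Y by (simp add: powr_mult)
  qed
  have ex: "exp (A + C - 2 * B) = exp A * exp C / (exp B * exp B)"
  proof -
    have "A + C - 2 * B = (A + C) - (B + B)" by simp
    thus ?thesis by (simp only: exp_diff exp_add)
  qed
  have pw: "(1 + 1 * Y) powr (-2*r) = 1 / ((1 + 1 * Y) powr r * (1 + 1 * Y) powr r)"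
  proof -
    have "(1 + 1 * Y) powr (-2*r) = 1 / (1 + 1 * Y) powr (r + r)"
      using powr_minus_divide[of "1 + 1 * Y" "r + r"] by simp
    also have "(1 + 1 * Y) powr (r + r) = (1 + 1 * Y) powr r * (1 + 1 * Y) powr r" by (rule powr_add)
    finally show ?thesis .
  qed
  have q1: "(1 + 1 * Y) powr r > 0" "(1 + 2 * Y) powr r > 0" using Y by simp_all
  show ?thesis
    unfolding A_def[symmetric] B_def[symmetric] C_def[symmetric] Y_def[symmetric] N_def[symmetric] p1 p2 ex pw
    using N q1 by (simp add: field_simps power2_eq_square)
qed

lemma W_alg:
  fixes b0 b1 b2 e0 e1 e2 :: real
  assumes X: "b1 + e1 \<noteq> 0" and b1: "b1 \<noteq> 0"
  shows "(b0 + e0) * (b2 + e2) / (b1 + e1)^2 - b0 * b2 * (1/b1)^2 =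
    e0 * ((b2 + e2) * (1 / (b1 + e1))^2) + e2 * (b0 * (1 / (b1 + e1))^2)
    + e1 * (- ((1 / (b1 + e1)) * (1 / b1) * (1 / (b1 + e1) + 1 / b1) * b0 * b2))"
proof -
  define X where "X = b1 + e1"
  have e1: "e1 = X - b1" unfolding X_def by simp
  have X0: "X \<noteq> 0" using X unfolding X_def .
  show ?thesis unfolding X_def[symmetric] e1 using X0 b1
    by (simp add: field_simps power2_eq_square)
qed

theorem mainTheorem3:
  fixes a :: "nat \<Rightarrow> real" and \<rho> M :: nat and \<mu> b :: "nat \<Rightarrow> real" and r :: real
  assumes "P_recursive a"
    and "\<rho> > 0" and "M > 0"
    and "b 0 \<noteq> 0"
    and "(\<lambda>n. a n / (exp (Qexp \<rho> \<mu> n) * real n powr r)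
              - (\<Sum>s=0..M. b s * real n powr (- real s / real \<rho>)))
          \<in> o[sequentially](\<lambda>n. real n powr (- real M / real \<rho>))"
  shows "\<exists>c :: nat \<Rightarrow> real.
           (\<lambda>n. real n powr (real M / real \<rho>) *
               (a n * a (n + 2) / (a (n + 1))\<^sup>2 - 1
                - (\<Sum>i=1..M. c i / real n powr (real i / real \<rho>))))
           \<longlonglongrightarrow> 0"
proof -
  have \<rho>: "\<rho> > 0" by (rule assms(2))
  have b0: "b 0 \<noteq> 0" by (rule assms(4))
  have xt: "xs \<rho> \<longlonglongrightarrow> 0" by (rule xs_tendsto[OF \<rho>])
  define G where "G n = exp (Qexp \<rho> \<mu> n) * real n powr r" for n
  define B where "B n = (\<Sum>s=0..M. b s * real n powr (- real s / real \<rho>))" for n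
  define e where "e n = a n / G n - B n" for n
  define Uf where "Uf n = exp (Qexp \<rho> \<mu> n + Qexp \<rho> \<mu> (n+2) - 2 * Qexp \<rho> \<mu> (n+1))
      * (1 + 2 * ys n) powr r * (1 + 1 * ys n) powr (-2*r)" for n
  define Vf where "Vf n = B n * B (n+2) * (1 / B (n+1))^2" for n
  define R where "R n = a n * a (n + 2) / (a (n + 1))\<^sup>2" for n
  have eo: "e \<in> o(\<lambda>n. real n powr (- real M / real \<rho>))"
    using assms(5) unfolding e_def G_def B_def .
  have ev: "eventually (\<lambda>n. real n powr (- real M / real \<rho>) = xs \<rho> n ^ M) sequentially"
    using eventually_gt_at_top[of 0] by eventually_elim (simp add: xs_pow[OF \<rho>])
  have eM: "e \<in> o(\<lambda>n. xs \<rho> n ^ M)" using eo landau_o.small.cong[OF ev] by simp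
  have e1: "(\<lambda>n. e (n+1)) \<in> o(\<lambda>n. xs \<rho> n ^ M)" using shift_small[OF \<rho> eM] by simp
  have e2: "(\<lambda>n. e (n+2)) \<in> o(\<lambda>n. xs \<rho> n ^ M)"
    using shift_small[OF \<rho> shift_small[OF \<rho> eM]] by (simp add: numeral_2_eq_2)
  have xM1: "(\<lambda>n. xs \<rho> n ^ M) \<in> O(\<lambda>_. 1)" using xpow_mono[OF xt, of 0 M] by simp
  have et: "e \<longlonglongrightarrow> 0"
    using smalloD_tendsto[OF landau_o.small_big_trans[OF eM xM1]] by simp
  have et1: "(\<lambda>n. e (n+1)) \<longlonglongrightarrow> 0" using LIMSEQ_Suc[OF et] by simp
  have et2: "(\<lambda>n. e (n+2)) \<longlonglongrightarrow> 0" using LIMSEQ_Suc[OF LIMSEQ_Suc[OF et]] by (simp add: numeral_2_eq_2)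
  have XB0: "Xp (xs \<rho>) B (b 0)" using B_Ex[OF \<rho>, where M=M and b=b and k=0] unfolding B_def by simp
  have XB1: "Xp (xs \<rho>) (\<lambda>n. B (n+1)) (b 0)" using B_Ex[OF \<rho>, where M=M and b=b and k=1] unfolding B_def .
  have XB2: "Xp (xs \<rho>) (\<lambda>n. B (n+2)) (b 0)" using B_Ex[OF \<rho>, where M=M and b=b and k=2] unfolding B_def by simp
  have Bt0: "B \<longlonglongrightarrow> b 0" by (rule Xp_tendsto[OF xt XB0])
  have Bt1: "(\<lambda>n. B (n+1)) \<longlonglongrightarrow> b 0" by (rule Xp_tendsto[OF xt XB1])
  have Bt2: "(\<lambda>n. B (n+2)) \<longlonglongrightarrow> b 0" by (rule Xp_tendsto[OF xt XB2])
  have XV: "Xp (xs \<rho>) Vf (b 0 * b 0 * (1 / b 0)^2)"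
    unfolding Vf_def by (intro Xp_mult[OF xt] XB0 XB2 Xp_power[OF xt] Xp_inverse[OF xt XB1 b0])
  have XU: "Xp (xs \<rho>) Uf 1" unfolding Uf_def by (rule U_Ex[OF \<rho>])
  have XUV: "Xp (xs \<rho>) (\<lambda>n. Uf n * Vf n) 1" using Xp_mult[OF xt XU XV] b0 by (simp add: power2_eq_square)
  then obtain p where p: "poly p 0 = 1" "(\<lambda>n. Uf n * Vf n - poly p (xs \<rho> n)) \<in> O(\<lambda>n. xs \<rho> n ^ Suc M)"
    unfolding Xp_def by blast
  have xsm: "(\<lambda>n. xs \<rho> n ^ Suc M) \<in> o(\<lambda>n. xs \<rho> n ^ M)"
  proof (rule smalloI_tendsto)
    show "eventually (\<lambda>n. xs \<rho> n ^ M \<noteq> 0) sequentially"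
      using eventually_gt_at_top[of 0]
    proof eventually_elim
      case (elim n) thus ?case using xs_pos[OF \<rho> elim] by simp
    qed
    have "eventually (\<lambda>n. xs \<rho> n = xs \<rho> n ^ Suc M / xs \<rho> n ^ M) sequentially"
      using eventually_gt_at_top[of 0] by eventually_elim (use xs_pos[OF \<rho>] in simp)
    from Lim_transform_eventually[OF xt this]
    show "(\<lambda>n. xs \<rho> n ^ Suc M / xs \<rho> n ^ M) \<longlonglongrightarrow> 0" .
  qed
  have T2: "(\<lambda>n. Uf n * Vf n - poly p (xs \<rho> n)) \<in> o(\<lambda>n. xs \<rho> n ^ M)"
    by (rule landau_o.big_small_trans[OF p(2) xsm])
  obtain \<delta> K where dK: "\<delta> > 0"
    "\<forall>t. \<bar>t\<bar> < \<delta> \<longrightarrow> \<bar>poly p t - poly (\<Sum>i<Suc M. monom (coeff p i) i) t\<bar> \<le> K * \<bar>t\<bar>^Suc M"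
    using PS_trunc[OF PS_poly, of p "Suc M"] by blast
  have "(\<lambda>n. poly p (xs \<rho> n) - (\<Sum>i<Suc M. coeff p i * xs \<rho> n ^ i)) \<in> O(\<lambda>n. xs \<rho> n ^ Suc M)"
  proof (rule bigoI[where c=K])
    have "eventually (\<lambda>n. dist (xs \<rho> n) 0 < \<delta>) sequentially" using xt dK(1) by (rule tendstoD)
    thus "eventually (\<lambda>n. norm (poly p (xs \<rho> n) - (\<Sum>i<Suc M. coeff p i * xs \<rho> n ^ i))
        \<le> K * norm (xs \<rho> n ^ Suc M)) sequentially"
    proof eventually_elim
      case (elim n)
      hence "\<bar>xs \<rho> n\<bar> < \<delta>" by simp
      hence "\<bar>poly p (xs \<rho> n) - poly (\<Sum>i<Suc M. monom (coeff p i) i) (xs \<rho> n)\<bar> \<le> K * \<bar>xs \<rho> n\<bar>^Suc M"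
        using dK(2) by blast
      thus ?case by (simp only: poly_monom_sum real_norm_def power_abs)
    qed
  qed
  hence T3: "(\<lambda>n. poly p (xs \<rho> n) - (\<Sum>i<Suc M. coeff p i * xs \<rho> n ^ i)) \<in> o(\<lambda>n. xs \<rho> n ^ M)"
    by (rule landau_o.big_small_trans[OF _ xsm])
  define X1 where "X1 n = B (n+1) + e (n+1)" for n
  define X2 where "X2 n = B (n+2) + e (n+2)" for n
  have X1t: "X1 \<longlonglongrightarrow> b 0" unfolding X1_def using tendsto_add[OF Bt1 et1] by simp
  have X2t: "X2 \<longlonglongrightarrow> b 0" unfolding X2_def using tendsto_add[OF Bt2 et2] by simp
  define P1 where "P1 n = X2 n * (1 / X1 n)^2" for n
  define P2 where "P2 n = B n * (1 / X1 n)^2" for n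
  define P3 where "P3 n = - ((1 / X1 n) * (1 / B (n+1)) * (1 / X1 n + 1 / B (n+1)) * B n * B (n+2))" for n
  have iX1: "(\<lambda>n. 1 / X1 n) \<longlonglongrightarrow> 1 / b 0" by (rule tendsto_divide[OF tendsto_const X1t b0])
  have iB1: "(\<lambda>n. 1 / B (n+1)) \<longlonglongrightarrow> 1 / b 0" by (rule tendsto_divide[OF tendsto_const Bt1 b0])
  have P1b: "P1 \<in> O(\<lambda>_. 1)" unfolding P1_def
    by (rule tend_bigo1, rule tendsto_mult[OF X2t tendsto_power[OF iX1]])
  have P2b: "P2 \<in> O(\<lambda>_. 1)" unfolding P2_def
    by (rule tend_bigo1, rule tendsto_mult[OF Bt0 tendsto_power[OF iX1]])
  have P3b: "P3 \<in> O(\<lambda>_. 1)" unfolding P3_def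
    by (rule tend_bigo1, rule tendsto_minus[OF tendsto_mult[OF tendsto_mult[OF tendsto_mult[OF
        tendsto_mult[OF iX1 iB1] tendsto_add[OF iX1 iB1]] Bt0] Bt2]])
  have Ub: "Uf \<in> O(\<lambda>_. 1)" by (rule Xp_bigo1[OF xt XU])
  have S1: "(\<lambda>n. e n * P1 n) \<in> o(\<lambda>n. xs \<rho> n ^ M)" by (rule landau_o.small_1_mult[OF eM P1b])
  have S2: "(\<lambda>n. e (n+2) * P2 n) \<in> o(\<lambda>n. xs \<rho> n ^ M)" by (rule landau_o.small_1_mult[OF e2 P2b])
  have S3: "(\<lambda>n. e (n+1) * P3 n) \<in> o(\<lambda>n. xs \<rho> n ^ M)" by (rule landau_o.small_1_mult[OF e1 P3b])
  have S: "(\<lambda>n. (e n * P1 n + e (n+2) * P2 n + e (n+1) * P3 n) * Uf n) \<in> o(\<lambda>n. xs \<rho> n ^ M)"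
    by (rule landau_o.small_1_mult[OF _ Ub]) (intro sum_in_smallo S1 S2 S3)
  have evne: "eventually (\<lambda>n. X1 n \<noteq> 0 \<and> B (n+1) \<noteq> 0 \<and> n > 0) sequentially"
    using tendsto_imp_eventually_ne[OF X1t b0] tendsto_imp_eventually_ne[OF Bt1 b0] eventually_gt_at_top[of 0]
    by eventually_elim blast
  have T1: "(\<lambda>n. R n - Uf n * Vf n) \<in> o(\<lambda>n. xs \<rho> n ^ M)"
  proof -
    have "eventually (\<lambda>n. (e n * P1 n + e (n+2) * P2 n + e (n+1) * P3 n) * Uf n = R n - Uf n * Vf n) sequentially"
      using evne
    proof eventually_elim
      case (elim n)
      have Gp: "G k > 0" if "k > 0" for k unfolding G_def using that by simp
      have ak: "a k = G k * (B k + e k)" if "k > 0" for k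
        unfolding e_def using Gp[OF that] by simp
      have R: "R n = (G n * G (n+2) / (G (n+1))^2) * ((B n + e n) * X2 n / (X1 n)^2)"
        unfolding R_def X1_def X2_def using ak[of n] ak[of "n+1"] ak[of "n+2"] elim Gp[of "n+1"]
        by (simp add: field_simps power2_eq_square)
      have U: "G n * G (n+2) / (G (n+1))^2 = Uf n"
        unfolding G_def Uf_def by (rule U_identity[OF \<rho>]) (use elim in simp)
      have W: "(B n + e n) * X2 n / (X1 n)^2 - Vf n = e n * P1 n + e (n+2) * P2 n + e (n+1) * P3 n"
        unfolding Vf_def P1_def P2_def P3_def X1_def X2_def
        by (rule W_alg) (use elim in \<open>simp_all add: X1_def\<close>)
      show ?case unfolding R U W[symmetric] by (simp add: algebra_simps)
    qed
    from landau_o.small.in_cong[OF this] S show ?thesis by simp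
  qed
  define c where "c i = coeff p i" for i
  have T: "(\<lambda>n. R n - (\<Sum>i<Suc M. c i * xs \<rho> n ^ i)) \<in> o(\<lambda>n. xs \<rho> n ^ M)"
  proof -
    have "(\<lambda>n. (R n - Uf n * Vf n) + (Uf n * Vf n - poly p (xs \<rho> n))
        + (poly p (xs \<rho> n) - (\<Sum>i<Suc M. coeff p i * xs \<rho> n ^ i))) \<in> o(\<lambda>n. xs \<rho> n ^ M)"
      by (intro sum_in_smallo T1 T2 T3)
    moreover have "(\<lambda>n. (R n - Uf n * Vf n) + (Uf n * Vf n - poly p (xs \<rho> n))
        + (poly p (xs \<rho> n) - (\<Sum>i<Suc M. coeff p i * xs \<rho> n ^ i))) =
        (\<lambda>n. R n - (\<Sum>i<Suc M. c i * xs \<rho> n ^ i))"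
      unfolding c_def by (rule ext) linarith
    ultimately show ?thesis by simp
  qed
  have lim: "(\<lambda>n. (R n - (\<Sum>i<Suc M. c i * xs \<rho> n ^ i)) / xs \<rho> n ^ M) \<longlonglongrightarrow> 0"
    by (rule smalloD_tendsto[OF T])
  have c0: "c 0 = 1" unfolding c_def using p(1) by (simp add: poly_0_coeff_0)
  show ?thesis
  proof (intro exI[of _ c])
    have "eventually (\<lambda>n. (R n - (\<Sum>i<Suc M. c i * xs \<rho> n ^ i)) / xs \<rho> n ^ M =
        real n powr (real M / real \<rho>) *
               (a n * a (n + 2) / (a (n + 1))\<^sup>2 - 1
                - (\<Sum>i=1..M. c i / real n powr (real i / real \<rho>)))) sequentially"
      using eventually_gt_at_top[of 0]
    proof eventually_elim
      case (elim n)
      have xi: "xs \<rho> n ^ i = 1 / real n powr (real i / real \<rho>)" for i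
        using xs_pow[OF \<rho> elim, of i] powr_minus_divide[of "real n" "real i / real \<rho>"] by simp
      have "{..<Suc M} = insert 0 {1..M}" by auto
      hence sm: "(\<Sum>i<Suc M. c i * xs \<rho> n ^ i) = 1 + (\<Sum>i=1..M. c i / real n powr (real i / real \<rho>))"
        using c0 elim by (simp add: xi)
      have pos: "real n powr (real M / real \<rho>) > 0" using elim by simp
      show ?case unfolding sm R_def xi[of M] using pos by (simp add: field_simps)
    qed
    from Lim_transform_eventually[OF lim this]
    show "(\<lambda>n. real n powr (real M / real \<rho>) *
               (a n * a (n + 2) / (a (n + 1))\<^sup>2 - 1
                - (\<Sum>i=1..M. c i / real n powr (real i / real \<rho>)))) \<longlonglongrightarrow> 0" .
  qed
qed


end
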